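(* The sets $$R_{1,0}=\{\lfloor n\varphi\rfloor+n\mid n\in\mathbb N\}=\{2,5,7,10,13,\dots\},\quad R_{1,1}=\{\lfloor n\varphi\rfloor+n-1\mid n\in\mathbb N\}=\{1,4,6,9,12,\dots\},$$ $$R_{2,0}=\{2\lfloor n\varphi\rfloor+n\mid n\in\mathbb N\}=\{3,8,11,16,21,\dots\}$$ form a partition of $\mathbb N$ (they are pairwise disjoint and their union is $\mathbb N$).
   Context: $\mathbb N=\{1,2,\dots\}$ and $\varphi=\frac{1+\sqrt5}{2}$ is the golden ratio. (In general $R_{i,j}$ denotes the range of $n\mapsto F(i+1)\lfloor n\varphi\rfloor+F(i)n-j$, $F$ the Fibonacci numbers with $F(0)=0,F(1)=F(2)=1$.) *)

theory Defs
  imports Complex_Main "HOL-Number_Theory.Fib"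
begin

definition phi :: real where "phi = (1 + sqrt 5) / 2"

definition R :: "nat \<Rightarrow> nat \<Rightarrow> int set" where
  "R i j = {int (fib (i+1)) * \<lfloor>real n * phi\<rfloor> + int (fib i) * int n - int j | n::nat. n \<ge> 1}"

end

theory Submission
  imports Defs "HOL-Computational_Algebra.Primes"
begin

lemma p5: "prime (5::nat)"
proof -
  have "{2..<5::nat} = {2,3,4}" by auto
  thus ?thesis by (simp add: prime_nat_iff')
qed

lemma desc: "(j::nat)^2 = 5 * n^2 \<Longrightarrow> n = 0"
proof (induction n arbitrary: j rule: less_induct)
  case (less n)
  show ?case
  proof (rule ccontr)
    assume n0: "n \<noteq> 0"
    have "5 dvd j^2" using less.prems by simp
    hence "5 dvd j" using p5 prime_dvd_power by blast
    then obtain q where q: "j = 5*q" by blast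
    hence "n^2 = 5*q^2" using less.prems by (simp add: power2_eq_square)
    hence "5 dvd n^2" by simp
    hence "5 dvd n" using p5 prime_dvd_power by blast
    then obtain r where r: "n = 5*r" by blast
    hence "r < n" using n0 by simp
    have "q^2 = 5*r^2" using \<open>n^2 = 5*q^2\<close> r by (simp add: power2_eq_square)
    hence "r = 0" using less.IH[OF \<open>r < n\<close>] by blast
    thus False using r n0 by simp
  qed
qed

lemma phi_sq: "phi^2 = phi + 1"
  by (simp add: phi_def power2_eq_square algebra_simps)

lemma phi_bounds: "1.6 < phi" "phi < 1.7"
proof -
  have "2.2 < sqrt 5" by (rule real_less_rsqrt) (simp add: power2_eq_square)
  moreover have "sqrt 5 < 2.4" by (rule real_less_lsqrt) (simp_all add: power2_eq_square)
  ultimately show "1.6 < phi" "phi < 1.7" by (simp_all add: phi_def)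
qed

lemma phi_a: "phi * (phi - 1) = 1"
  using phi_sq by (simp add: power2_eq_square algebra_simps)

lemma phi_b: "(phi + 1) * (2 - phi) = 1"
  using phi_sq by (simp add: power2_eq_square algebra_simps)

lemma irr:
  fixes p j :: int
  assumes "p \<ge> 1"
  shows "of_int p * phi \<noteq> of_int j"
proof
  assume eq: "of_int p * phi = of_int j"
  hence "of_int p * sqrt 5 = of_int (2*j - p)"
    by (simp add: phi_def algebra_simps)
  hence "(of_int p * sqrt 5)^2 = (of_int (2*j - p) :: real)^2" by simp
  hence "of_int (5 * p^2) = (of_int ((2*j - p)^2) :: real)"
    by (simp add: power_mult_distrib)
  hence e: "5 * p^2 = (2*j - p)^2" by linarith
  have "int ((nat \<bar>2*j - p\<bar>)^2) = int (5 * (nat p)^2)"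
    using e assms by simp
  hence "(nat \<bar>2*j - p\<bar>)^2 = 5 * (nat p)^2" by linarith
  hence "nat p = 0" by (rule desc)
  thus False using assms by simp
qed

definition af :: "int \<Rightarrow> int" where "af p = \<lfloor>of_int p * phi\<rfloor>"

lemma frac_bounds:
  assumes "p \<ge> 1"
  shows "0 < of_int p * phi - of_int (af p)" "of_int p * phi - of_int (af p) < 1"
proof -
  have "of_int (af p) \<le> of_int p * phi" unfolding af_def by simp
  moreover have "of_int (af p) \<noteq> of_int p * phi" using irr[OF assms] by metis
  ultimately show "0 < of_int p * phi - of_int (af p)" by simp
  show "of_int p * phi - of_int (af p) < 1" unfolding af_def by linarith
qed

lemma af_pos: "p \<ge> 1 \<Longrightarrow> af p \<ge> 1"
proof -
  assume p: "p \<ge> 1"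
  have "1 * phi \<le> of_int p * phi" using p phi_bounds by (intro mult_right_mono) simp_all
  hence "1 \<le> of_int p * phi" using phi_bounds by linarith
  thus ?thesis unfolding af_def by (simp add: one_le_floor)
qed

lemma aa:
  assumes "p \<ge> 1"
  shows "af (af p) = af p + p - 1"
proof -
  define a where "a = af p"
  define f where "f = of_int p * phi - of_int a"
  have f0: "0 < f" "f < 1" using frac_bounds[OF assms] by (simp_all add: f_def a_def)
  have id: "of_int a * phi = of_int a + of_int p - f * (phi - 1)"
  proof -
    have "of_int a * phi = (of_int p * phi - f) * phi" by (simp add: f_def)
    also have "\<dots> = of_int p * phi^2 - f * phi" by (simp add: power2_eq_square algebra_simps)
    also have "\<dots> = of_int a + of_int p - f * (phi - 1)" by (simp add: phi_sq f_def algebra_simps)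
    finally show ?thesis .
  qed
  have "0 < f * (phi - 1)" using f0 phi_bounds by simp
  moreover have "f * (phi - 1) < 1"
  proof -
    have "f * (phi - 1) < 1 * (phi - 1)" using f0 phi_bounds by (intro mult_strict_right_mono) simp_all
    hence "f * (phi - 1) < phi - 1" by (simp only: mult_1_left)
    thus ?thesis using phi_bounds by linarith
  qed
  ultimately have "\<lfloor>of_int a * phi\<rfloor> = a + p - 1"
    unfolding id by (intro floor_unique) simp_all
  thus ?thesis by (simp add: af_def a_def)
qed

lemma ab:
  assumes "p \<ge> 1"
  shows "af (af p + p) = 2 * af p + p"
proof -
  define a where "a = af p"
  define f where "f = of_int p * phi - of_int a"
  have f0: "0 < f" "f < 1" using frac_bounds[OF assms] by (simp_all add: f_def a_def)
  have id: "of_int (a + p) * phi = of_int (2*a + p) + f * (2 - phi)"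
  proof -
    have "of_int (a+p) * phi = (of_int p * phi - f) * phi + of_int p * phi" by (simp add: f_def algebra_simps)
    also have "\<dots> = of_int p * phi^2 - f * phi + of_int p * phi" by (simp add: power2_eq_square algebra_simps)
    also have "\<dots> = of_int (2*a + p) + f * (2 - phi)" by (simp add: phi_sq f_def algebra_simps)
    finally show ?thesis .
  qed
  have "0 < f * (2 - phi)" using f0 phi_bounds by simp
  moreover have "f * (2 - phi) < 1"
  proof -
    have "f * (2 - phi) < 1 * (2 - phi)" using f0 phi_bounds by (intro mult_strict_right_mono) simp_all
    hence "f * (2 - phi) < 2 - phi" by (simp only: mult_1_left)
    thus ?thesis using phi_bounds by linarith
  qed
  ultimately have "\<lfloor>of_int (a + p) * phi\<rfloor> = 2 * a + p"
    unfolding id by (intro floor_unique) simp_all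
  thus ?thesis by (simp add: af_def a_def)
qed

lemma af_mono: "p < q \<Longrightarrow> af p < af q"
proof -
  assume "p < q"
  hence "of_int p + 1 \<le> (of_int q :: real)" by simp
  hence "(of_int p + 1) * phi \<le> of_int q * phi" using phi_bounds by (intro mult_right_mono) simp_all
  hence "of_int p * phi + 1 < of_int q * phi" using phi_bounds by (simp add: algebra_simps)
  thus ?thesis unfolding af_def by linarith
qed

lemma af_inj: "af p = af q \<Longrightarrow> p = q"
  by (metis af_mono less_irrefl linorder_neqE)

lemma excl:
  assumes p: "p \<ge> 1" and q: "q \<ge> 1" and e: "af p = af q + q"
  shows False
proof -
  define k where "k = af p"
  have "of_int k < of_int p * phi" "of_int p * phi < of_int k + 1"
    using frac_bounds[OF p] by (simp_all add: k_def)
  have "of_int (k - q) < of_int q * phi" "of_int q * phi < of_int (k - q) + 1"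
    using frac_bounds[OF q] e by (simp_all add: k_def)
  have "of_int k * (phi - 1) < of_int p * phi * (phi - 1)"
    using \<open>of_int k < of_int p * phi\<close> phi_bounds by (intro mult_strict_right_mono) simp_all
  hence h1: "of_int k * (phi - 1) < of_int p" by (simp only: mult.assoc phi_a phi_b mult_1_right)
  have "of_int p * phi * (phi - 1) < (of_int k + 1) * (phi - 1)"
    using \<open>of_int p * phi < of_int k + 1\<close> phi_bounds by (intro mult_strict_right_mono) simp_all
  hence h2: "of_int p < (of_int k + 1) * (phi - 1)" by (simp only: mult.assoc phi_a phi_b mult_1_right)
  have "of_int k < of_int q * (phi + 1)"
    using \<open>of_int (k - q) < of_int q * phi\<close> by (simp add: algebra_simps)
  hence "of_int k * (2 - phi) < of_int q * (phi + 1) * (2 - phi)"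
    using phi_bounds by (intro mult_strict_right_mono) simp_all
  hence h3: "of_int k * (2 - phi) < of_int q" by (simp only: mult.assoc phi_a phi_b mult_1_right)
  have "of_int q * (phi + 1) < of_int k + 1"
    using \<open>of_int q * phi < of_int (k - q) + 1\<close> by (simp add: algebra_simps)
  hence "of_int q * (phi + 1) * (2 - phi) < (of_int k + 1) * (2 - phi)"
    using phi_bounds by (intro mult_strict_right_mono) simp_all
  hence h4: "of_int q < (of_int k + 1) * (2 - phi)" by (simp only: mult.assoc phi_a phi_b mult_1_right)
  have "of_int k < (of_int (p + q) :: real)" using h1 h3 by (simp add: algebra_simps)
  moreover have "of_int (p + q) < (of_int (k + 1) :: real)" using h2 h4 by (simp add: algebra_simps)
  ultimately have "k < p + q" "p + q < k + 1" by linarith+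
  thus False by simp
qed

lemma exist:
  assumes k: "k \<ge> 1"
  shows "(\<exists>p\<ge>1. af p = k) \<or> (\<exists>q\<ge>1. af q + q = k)"
proof -
  define x where "x = of_int k * (phi - 1)"
  define fl where "fl = \<lfloor>x\<rfloor>"
  define f where "f = x - of_int fl"
  have f01: "0 \<le> f" "f < 1" unfolding f_def fl_def by linarith+
  have xphi: "x * phi = of_int k" unfolding x_def
    by (metis mult.assoc mult.commute phi_a mult_1_right)
  have xpos: "0 < x" using k phi_bounds unfolding x_def by simp
  have xk: "x < of_int k"
  proof -
    have "of_int k * (phi - 1) < of_int k * 1" using k phi_bounds by (intro mult_strict_left_mono) simp_all
    thus ?thesis unfolding x_def by simp
  qed
  have fne0: "f \<noteq> 0"
  proof
    assume "f = 0"
    hence "of_int k * phi = of_int (fl + k)" unfolding f_def x_def by (simp add: algebra_simps)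
    thus False using irr[OF k] by blast
  qed
  have fne: "f \<noteq> 2 - phi"
  proof
    assume "f = 2 - phi"
    hence "of_int (k + 1) * phi = of_int (fl + k + 2)" unfolding f_def x_def by (simp add: algebra_simps)
    thus False using irr[of "k+1" "fl + k + 2"] k by simp
  qed
  show ?thesis
  proof (cases "f > 2 - phi")
    case True
    define p where "p = fl + 1"
    have "fl \<ge> 0" unfolding fl_def using xpos by simp
    hence p1: "p \<ge> 1" unfolding p_def by simp
    have "of_int p * phi = of_int k + (1 - f) * phi"
      unfolding p_def f_def using xphi by (simp add: algebra_simps)
    moreover have "0 \<le> (1 - f) * phi" using f01 phi_bounds by simp
    moreover have "(1 - f) * phi < 1"
    proof -
      have "(1 - f) * phi < (phi - 1) * phi" using True phi_bounds by (intro mult_strict_right_mono) auto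
      thus ?thesis using phi_a by (simp add: mult.commute)
    qed
    ultimately have "af p = k" unfolding af_def by (intro floor_unique) simp_all
    thus ?thesis using p1 by blast
  next
    case False
    hence fl2: "f < 2 - phi" using fne by simp
    define q where "q = k - fl"
    have "fl < k" unfolding fl_def using xk by linarith
    hence q1: "q \<ge> 1" unfolding q_def by simp
    have "of_int q * phi = of_int fl + f * (phi + 1)"
    proof -
      have "of_int q * phi = (of_int k - x + f) * phi" unfolding q_def f_def by simp
      also have "\<dots> = of_int k * phi - of_int k + f * phi" using xphi by (simp add: algebra_simps)
      also have "\<dots> = of_int fl + f * (phi + 1)" unfolding f_def x_def by (simp add: algebra_simps)
      finally show ?thesis .
    qed
    moreover have "0 \<le> f * (phi + 1)" using f01 phi_bounds by simp
    moreover have "f * (phi + 1) < 1"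
    proof -
      have "f * (phi + 1) < (2 - phi) * (phi + 1)" using fl2 phi_bounds by (intro mult_strict_right_mono) auto
      thus ?thesis using phi_b by (simp add: mult.commute)
    qed
    ultimately have "af q = fl" unfolding af_def by (intro floor_unique) simp_all
    hence "af q + q = k" unfolding q_def by simp
    thus ?thesis using q1 by blast
  qed
qed

lemma conv: "{g (int n) | n::nat. n \<ge> 1} = {g p | p::int. p \<ge> 1}"
proof (intro set_eqI iffI)
  fix z assume "z \<in> {g (int n) | n::nat. n \<ge> 1}"
  then obtain n where "z = g (int n)" "n \<ge> 1" by blast
  thus "z \<in> {g p | p::int. p \<ge> 1}" by force
next
  fix z assume "z \<in> {g p | p::int. p \<ge> 1}"
  then obtain p where "z = g p" "p \<ge> 1" by blast
  hence "z = g (int (nat p))" "nat p \<ge> 1" by simp_all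
  thus "z \<in> {g (int n) | n::nat. n \<ge> 1}" by blast
qed

lemma R10: "R 1 0 = {af p + p | p. p \<ge> 1}"
proof -
  have "R 1 0 = {(\<lambda>p. af p + p) (int n) | n::nat. n \<ge> 1}"
    unfolding R_def af_def by (simp add: numeral_eq_Suc)
  thus ?thesis using conv[of "\<lambda>p. af p + p"] by simp
qed

lemma R11: "R 1 1 = {af p + p - 1 | p. p \<ge> 1}"
proof -
  have "R 1 1 = {(\<lambda>p. af p + p - 1) (int n) | n::nat. n \<ge> 1}"
    unfolding R_def af_def by (simp add: numeral_eq_Suc)
  thus ?thesis using conv[of "\<lambda>p. af p + p - 1"] by simp
qed

lemma R20: "R 2 0 = {2 * af p + p | p. p \<ge> 1}"
proof -
  have "R 2 0 = {(\<lambda>p. 2 * af p + p) (int n) | n::nat. n \<ge> 1}"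
    unfolding R_def af_def by (simp add: numeral_eq_Suc)
  thus ?thesis using conv[of "\<lambda>p. 2 * af p + p"] by simp
qed

theorem corollary3p3:
  shows "R 1 0 \<inter> R 1 1 = {} \<and> R 1 0 \<inter> R 2 0 = {} \<and> R 1 1 \<inter> R 2 0 = {}
    \<and> R 1 0 \<union> R 1 1 \<union> R 2 0 = {k::int. k \<ge> 1}"
proof (intro conjI)
  show "R 1 0 \<inter> R 1 1 = {}"
  proof (rule ccontr)
    assume "R 1 0 \<inter> R 1 1 \<noteq> {}"
    then obtain p q where p: "p \<ge> 1" and q: "q \<ge> 1" and e: "af p + p = af q + q - 1"
      unfolding R10 R11 by blast
    have "af (af q) = af p + p" using aa[OF q] e by simp
    thus False using excl[OF af_pos[OF q] p] by simp
  qed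
  show "R 1 0 \<inter> R 2 0 = {}"
  proof (rule ccontr)
    assume "R 1 0 \<inter> R 2 0 \<noteq> {}"
    then obtain p q where p: "p \<ge> 1" and q: "q \<ge> 1" and e: "af p + p = 2 * af q + q"
      unfolding R10 R20 by blast
    have "af q + q \<ge> 1" using af_pos[OF q] q by simp
    have "af (af q + q) = af p + p" using ab[OF q] e by simp
    thus False using excl[OF \<open>af q + q \<ge> 1\<close> p] by simp
  qed
  show "R 1 1 \<inter> R 2 0 = {}"
  proof (rule ccontr)
    assume "R 1 1 \<inter> R 2 0 \<noteq> {}"
    then obtain p q where p: "p \<ge> 1" and q: "q \<ge> 1" and e: "af p + p - 1 = 2 * af q + q"
      unfolding R11 R20 by blast
    have "af (af p) = af (af q + q)" using aa[OF p] ab[OF q] e by simp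
    hence "af p = af q + q" by (rule af_inj)
    thus False using excl[OF p q] by simp
  qed
  show "R 1 0 \<union> R 1 1 \<union> R 2 0 = {k::int. k \<ge> 1}"
  proof (intro set_eqI iffI)
    fix k assume "k \<in> R 1 0 \<union> R 1 1 \<union> R 2 0"
    thus "k \<in> {k::int. k \<ge> 1}" unfolding R10 R11 R20 using af_pos by force
  next
    fix k :: int assume "k \<in> {k::int. k \<ge> 1}"
    hence k: "k \<ge> 1" by simp
    from exist[OF k] show "k \<in> R 1 0 \<union> R 1 1 \<union> R 2 0"
    proof
      assume "\<exists>q\<ge>1. af q + q = k"
      thus ?thesis unfolding R10 by blast
    next
      assume "\<exists>p\<ge>1. af p = k"
      then obtain p where p: "p \<ge> 1" "af p = k" by blast
      from exist[OF p(1)] show ?thesis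
      proof
        assume "\<exists>n\<ge>1. af n = p"
        then obtain n where n: "n \<ge> 1" "af n = p" by blast
        have "k = af n + n - 1" using aa[OF n(1)] n p by simp
        thus ?thesis unfolding R11 using n(1) by blast
      next
        assume "\<exists>n\<ge>1. af n + n = p"
        then obtain n where n: "n \<ge> 1" "af n + n = p" by blast
        have "k = 2 * af n + n" using ab[OF n(1)] n p by simp
        thus ?thesis unfolding R20 using n(1) by blast
      qed
    qed
  qed
qed

end
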